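(* Let $V$ be a finite-dimensional super vector space over a field of characteristic $0$ and let $\omega:V\times V\to V$ be a bilinear map with $\omega(V_\alpha,V_\beta)\subseteq V_{\alpha+\beta}$. For $x\in V$ let $\mathrm{ad}_\omega(x)\in\mathfrak{gl}(V)$ be $\mathrm{ad}_\omega(x)(y)=\omega(x,y)$, and let $\mathcal{F}_\omega=\{\mathrm{ad}_\omega(x)+x: x\in V\}\subseteq\mathcal{E}=\mathfrak{gl}(V)\oplus V$. Then $(V,\omega)$ is a Lie superalgebra (with bracket $[x,y]=\omega(x,y)$) if and only if $\mathcal{F}_\omega=\mathcal{F}_\omega^{\perp}$ and $\mathcal{F}_\omega$ is closed under the bracket $[\![\cdot,\cdot]\!]$.
   Context: $\mathfrak{gl}(V)$: linear endomorphisms of $V$ with natural $\mathbb{Z}_2$-grading and supercommutator $[A,B]=AB-(-1)^{|A||B|}BA$. $\mathcal{E}=\mathfrak{gl}(V)\oplus V$ graded by $\mathcal{E}_\alpha=\mathfrak{gl}(V)_\alpha\oplus V_\alpha$, homogeneous elements $A+x$ with $|A|=|x|$. Bracket: $[\![A+x,B+y]\!]=[A,B]+\tfrac12(Ay-(-1)^{|x||y|}Bx)$; $V$-valued pairing: $\langle A+x,B+y\rangle=\tfrac12(Ay+(-1)^{|x||y|}Bx)$ (both extended bilinearly). For a subspace $F\subseteq\mathcal{E}$, $F^\perp=\{e\in\mathcal{E}:\langle e,f\rangle=0\ \forall f\in F\}$. A Lie superalgebra is a super vector space $L$ with bilinear bracket satisfying $[L_\alpha,L_\beta]\subseteq L_{\alpha+\beta}$,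 super skew-symmetry $[x,y]=-(-1)^{|x||y|}[y,x]$, and the super Jacobi identity $[x,[y,z]]=[[x,y],z]+(-1)^{|x||y|}[y,[x,z]]$ for homogeneous $x,y,z$. *)

theory Defs
  imports Complex_Main
begin

text \<open>The parity group Z2 is modelled by bool (False = even, True = odd);
  addition in Z2 is inequality (xor).\<close>

definition zadd :: "bool \<Rightarrow> bool \<Rightarrow> bool" where
  "zadd a b = (a \<noteq> b)"

definition sgnsc :: "('k::field \<Rightarrow> 'v \<Rightarrow> 'v) \<Rightarrow> bool \<Rightarrow> bool \<Rightarrow> 'v \<Rightarrow> 'v" where
  "sgnsc sc a b v = sc (if a \<and> b then -1 else 1) v"

definition fd_super_vector_space ::
  "('k::field \<Rightarrow> 'v::ab_group_add \<Rightarrow> 'v) \<Rightarrow> (bool \<Rightarrow> 'v set) \<Rightarrow> bool" where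
  "fd_super_vector_space sc G \<longleftrightarrow>
     vector_space sc \<and> (\<exists>B. finite_dimensional_vector_space sc B) \<and>
     Modules.module.subspace sc (G False) \<and> Modules.module.subspace sc (G True) \<and>
     G False \<inter> G True = {0} \<and>
     (\<forall>x. \<exists>u\<in>G False. \<exists>w\<in>G True. x = u + w)"

definition proj :: "(bool \<Rightarrow> 'v::ab_group_add set) \<Rightarrow> bool \<Rightarrow> 'v \<Rightarrow> 'v" where
  "proj G a x = (THE y. y \<in> G a \<and> x - y \<in> G (\<not> a))"

definition gl :: "('k::field \<Rightarrow> 'v::ab_group_add \<Rightarrow> 'v) \<Rightarrow> ('v \<Rightarrow> 'v) set" where
  "gl sc = {A. Vector_Spaces.linear sc sc A}"

definition glcomp :: "(bool \<Rightarrow> 'v::ab_group_add set) \<Rightarrow> bool \<Rightarrow> ('v \<Rightarrow> 'v) \<Rightarrow> ('v \<Rightarrow> 'v)" where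
  "glcomp G a A = (\<lambda>v. proj G (zadd a False) (A (proj G False v))
                     + proj G (zadd a True) (A (proj G True v)))"

definition scomm :: "('k::field \<Rightarrow> 'v::ab_group_add \<Rightarrow> 'v) \<Rightarrow> bool \<Rightarrow> bool \<Rightarrow>
    ('v \<Rightarrow> 'v) \<Rightarrow> ('v \<Rightarrow> 'v) \<Rightarrow> ('v \<Rightarrow> 'v)" where
  "scomm sc a b A B = (\<lambda>v. A (B v) - sgnsc sc a b (B (A v)))"

text \<open>The space E = gl(V) \<oplus> V, elements are pairs (A, x) standing for A + x.\<close>
definition Esp :: "('k::field \<Rightarrow> 'v::ab_group_add \<Rightarrow> 'v) \<Rightarrow> (('v \<Rightarrow> 'v) \<times> 'v) set" where
  "Esp sc = gl sc \<times> UNIV"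

definition Ecomp :: "(bool \<Rightarrow> 'v::ab_group_add set) \<Rightarrow> bool \<Rightarrow> ('v \<Rightarrow> 'v) \<times> 'v \<Rightarrow> ('v \<Rightarrow> 'v) \<times> 'v" where
  "Ecomp G a e = (glcomp G a (fst e), proj G a (snd e))"

definition hbr :: "('k::field_char_0 \<Rightarrow> 'v::ab_group_add \<Rightarrow> 'v) \<Rightarrow> bool \<Rightarrow> bool \<Rightarrow>
    ('v \<Rightarrow> 'v) \<times> 'v \<Rightarrow> ('v \<Rightarrow> 'v) \<times> 'v \<Rightarrow> ('v \<Rightarrow> 'v) \<times> 'v" where
  "hbr sc a b e f = (scomm sc a b (fst e) (fst f),
      sc (inverse 2) (fst e (snd f) - sgnsc sc a b (fst f (snd e))))"

definition hpair :: "('k::field_char_0 \<Rightarrow> 'v::ab_group_add \<Rightarrow> 'v) \<Rightarrow> bool \<Rightarrow> bool \<Rightarrow>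
    ('v \<Rightarrow> 'v) \<times> 'v \<Rightarrow> ('v \<Rightarrow> 'v) \<times> 'v \<Rightarrow> 'v" where
  "hpair sc a b e f = sc (inverse 2) (fst e (snd f) + sgnsc sc a b (fst f (snd e)))"

definition Ebr :: "('k::field_char_0 \<Rightarrow> 'v::ab_group_add \<Rightarrow> 'v) \<Rightarrow> (bool \<Rightarrow> 'v set) \<Rightarrow>
    ('v \<Rightarrow> 'v) \<times> 'v \<Rightarrow> ('v \<Rightarrow> 'v) \<times> 'v \<Rightarrow> ('v \<Rightarrow> 'v) \<times> 'v" where
  "Ebr sc G e f =
     (let r = (\<lambda>a b. hbr sc a b (Ecomp G a e) (Ecomp G b f)) in
      ((\<lambda>v. (\<Sum>a\<in>UNIV. \<Sum>b\<in>UNIV. fst (r a b) v)), (\<Sum>a\<in>UNIV. \<Sum>b\<in>UNIV. snd (r a b))))"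

definition Epair :: "('k::field_char_0 \<Rightarrow> 'v::ab_group_add \<Rightarrow> 'v) \<Rightarrow> (bool \<Rightarrow> 'v set) \<Rightarrow>
    ('v \<Rightarrow> 'v) \<times> 'v \<Rightarrow> ('v \<Rightarrow> 'v) \<times> 'v \<Rightarrow> 'v" where
  "Epair sc G e f = (\<Sum>a\<in>UNIV. \<Sum>b\<in>UNIV. hpair sc a b (Ecomp G a e) (Ecomp G b f))"

definition Eperp :: "('k::field_char_0 \<Rightarrow> 'v::ab_group_add \<Rightarrow> 'v) \<Rightarrow> (bool \<Rightarrow> 'v set) \<Rightarrow>
    (('v \<Rightarrow> 'v) \<times> 'v) set \<Rightarrow> (('v \<Rightarrow> 'v) \<times> 'v) set" where
  "Eperp sc G F = {e \<in> Esp sc. \<forall>f\<in>F. Epair sc G e f = 0}"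

definition ad :: "('v \<Rightarrow> 'v \<Rightarrow> 'v) \<Rightarrow> 'v \<Rightarrow> ('v \<Rightarrow> 'v)" where
  "ad \<omega> x = (\<lambda>y. \<omega> x y)"

definition Fom :: "('v \<Rightarrow> 'v \<Rightarrow> 'v) \<Rightarrow> (('v \<Rightarrow> 'v) \<times> 'v) set" where
  "Fom \<omega> = {(ad \<omega> x, x) | x. True}"

definition bilinear_map :: "('k::field \<Rightarrow> 'v::ab_group_add \<Rightarrow> 'v) \<Rightarrow> ('v \<Rightarrow> 'v \<Rightarrow> 'v) \<Rightarrow> bool" where
  "bilinear_map sc \<omega> \<longleftrightarrow> (\<forall>x. Vector_Spaces.linear sc sc (\<omega> x)) \<and>
                          (\<forall>y. Vector_Spaces.linear sc sc (\<lambda>x. \<omega> x y))"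

definition graded_map :: "(bool \<Rightarrow> 'v set) \<Rightarrow> ('v \<Rightarrow> 'v \<Rightarrow> 'v) \<Rightarrow> bool" where
  "graded_map G \<omega> \<longleftrightarrow> (\<forall>a b x y. x \<in> G a \<longrightarrow> y \<in> G b \<longrightarrow> \<omega> x y \<in> G (zadd a b))"

definition lie_superalgebra ::
  "('k::field \<Rightarrow> 'v::ab_group_add \<Rightarrow> 'v) \<Rightarrow> (bool \<Rightarrow> 'v set) \<Rightarrow> ('v \<Rightarrow> 'v \<Rightarrow> 'v) \<Rightarrow> bool" where
  "lie_superalgebra sc G br \<longleftrightarrow>
     bilinear_map sc br \<and> graded_map G br \<and>
     (\<forall>a b x y. x \<in> G a \<longrightarrow> y \<in> G b \<longrightarrow> br x y = - sgnsc sc a b (br y x)) \<and>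
     (\<forall>a b c x y z. x \<in> G a \<longrightarrow> y \<in> G b \<longrightarrow> z \<in> G c \<longrightarrow>
        br x (br y z) = br (br x y) z + sgnsc sc a b (br y (br x z)))"

end

theory Submission imports Defs begin

lemma sum_bool: "(\<Sum>a\<in>(UNIV::bool set). f a) = f False + f True"
  by (simp add: UNIV_bool add.commute)

lemma lin_add: "Vector_Spaces.linear sc sc A \<Longrightarrow> A (x + y) = A x + A y"
  by (metis linear_iff_module_hom module_hom.add)
lemma lin_0: "Vector_Spaces.linear sc sc A \<Longrightarrow> A 0 = 0"
  using lin_add[of sc A 0 0] by simp
lemma lin_diff: "Vector_Spaces.linear sc sc A \<Longrightarrow> A (x - y) = A x - A y"
  using lin_add[of sc A "x - y" y] by (simp add: algebra_simps)

locale svs =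
  fixes sc :: "'k::field_char_0 \<Rightarrow> 'v::ab_group_add \<Rightarrow> 'v" and G :: "bool \<Rightarrow> 'v set"
  assumes fd: "fd_super_vector_space sc G"
begin

lemma vs: "vector_space sc" using fd unfolding fd_super_vector_space_def by auto

sublocale V: vector_space sc by (rule vs)

lemma subG: "V.subspace (G a)"
  using fd by (cases a) (auto simp: fd_super_vector_space_def)

lemma G0: "0 \<in> G a" using V.subspace_0[OF subG] .
lemma Gadd: "x \<in> G a \<Longrightarrow> y \<in> G a \<Longrightarrow> x + y \<in> G a" using V.subspace_add[OF subG] .
lemma Gdiff: "x \<in> G a \<Longrightarrow> y \<in> G a \<Longrightarrow> x - y \<in> G a" using V.subspace_diff[OF subG] .
lemma Gint: "x \<in> G a \<Longrightarrow> x \<in> G (\<not>a) \<Longrightarrow> x = 0"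
  using fd by (cases a) (auto simp: fd_super_vector_space_def)
lemma decomp: "\<exists>u\<in>G False. \<exists>w\<in>G True. x = u + w"
  using fd by (auto simp: fd_super_vector_space_def)

lemma proj_unique:
  assumes "y \<in> G a" "x - y \<in> G (\<not>a)" shows "proj G a x = y"
proof -
  have "\<exists>!y. y \<in> G a \<and> x - y \<in> G (\<not>a)"
  proof (rule ex1I[of _ y])
    fix y' assume h: "y' \<in> G a \<and> x - y' \<in> G (\<not>a)"
    then have "y' - y \<in> G a" using assms Gdiff by blast
    moreover have "(x - y) - (x - y') \<in> G (\<not>a)" using h assms Gdiff by blast
    moreover have "(x - y) - (x - y') = y' - y" by (simp add: algebra_simps)
    ultimately have "y' - y = 0" using Gint by metis
    then show "y' = y" by simp
  qed (use assms in auto)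
  then show ?thesis unfolding proj_def by (rule the1_equality) (use assms in auto)
qed

lemma proj_ex: "proj G a x \<in> G a \<and> x - proj G a x \<in> G (\<not>a)"
proof -
  obtain u w where uw: "u \<in> G False" "w \<in> G True" "x = u + w" using decomp by blast
  have "\<exists>y. y \<in> G a \<and> x - y \<in> G (\<not>a)"
  proof (cases a)
    case True then show ?thesis using uw by (intro exI[of _ w]) auto
  next
    case False then show ?thesis using uw by (intro exI[of _ u]) auto
  qed
  then obtain y where "y \<in> G a" "x - y \<in> G (\<not>a)" by blast
  then show ?thesis using proj_unique by simp
qed

lemma proj_in: "proj G a x \<in> G a" using proj_ex by blast

lemma proj_split: "p \<in> G a \<Longrightarrow> q \<in> G (\<not>a) \<Longrightarrow> proj G a (p + q) = p"
  by (rule proj_unique) auto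
lemma proj_split': "p \<in> G (\<not>a) \<Longrightarrow> q \<in> G a \<Longrightarrow> proj G a (p + q) = q"
  by (rule proj_unique) auto
lemma proj_hom: "x \<in> G a \<Longrightarrow> proj G a x = x"
  using proj_split[of x a 0] G0 by simp
lemma proj_hom0: "x \<in> G (\<not>a) \<Longrightarrow> proj G a x = 0"
  using proj_unique[of 0 a x] G0 by simp
lemma proj_0: "proj G a 0 = 0" using proj_hom G0 by simp
lemma proj_sum: "proj G False x + proj G True x = x"
proof -
  have "proj G True x = x - proj G False x"
    by (rule proj_unique) (use proj_ex[of False x] in auto)
  then show ?thesis by simp
qed
lemma proj_cases: "x \<in> G a \<Longrightarrow> proj G c x = (if c = a then x else 0)"
  by (cases "c = a") (auto intro: proj_hom proj_hom0)

lemma sgn_eq: "sgnsc sc a b v = (if a \<and> b then - v else v)"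
  by (simp add: sgnsc_def)

lemma half: "sc (inverse 2) v + sc (inverse 2) v = v"
proof -
  have "sc (inverse 2) v + sc (inverse 2) v = sc (inverse 2 + inverse 2) v"
    by (rule V.scale_left_distrib[symmetric])
  also have "inverse 2 + inverse 2 = (1::'k)" by simp
  finally show ?thesis by (metis V.scale_one)
qed

lemma half0: "sc (inverse 2) v = 0 \<Longrightarrow> v = 0"
  using half[of v] by simp

end

locale svsw = svs sc G for sc :: "'k::field_char_0 \<Rightarrow> 'v::ab_group_add \<Rightarrow> 'v" and G +
  fixes \<omega> :: "'v \<Rightarrow> 'v \<Rightarrow> 'v"
  assumes bil: "bilinear_map sc \<omega>" and gr: "graded_map G \<omega>"
begin

lemma lin2: "Vector_Spaces.linear sc sc (\<omega> x)" using bil by (simp add: bilinear_map_def)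
lemma lin1: "Vector_Spaces.linear sc sc (\<lambda>x. \<omega> x y)" using bil by (simp add: bilinear_map_def)

lemma wadd1: "\<omega> (x + x') y = \<omega> x y + \<omega> x' y" using lin_add[OF lin1] by simp
lemma wadd2: "\<omega> x (y + y') = \<omega> x y + \<omega> x y'" using lin_add[OF lin2] by simp
lemma wz1[simp]: "\<omega> 0 y = 0" using lin_0[OF lin1] by simp
lemma wz2[simp]: "\<omega> x 0 = 0" using lin_0[OF lin2] by simp
lemma wdiff2: "\<omega> x (y - y') = \<omega> x y - \<omega> x y'" using lin_diff[OF lin2] by simp
lemma wneg2: "\<omega> x (- y) = - \<omega> x y" using wdiff2[of x 0 y] by simp

lemma grw: "x \<in> G a \<Longrightarrow> y \<in> G b \<Longrightarrow> \<omega> x y \<in> G (a \<noteq> b)"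
  using gr by (auto simp: graded_map_def zadd_def)

lemma wsplit1: "\<omega> x y = \<omega> (proj G False x) y + \<omega> (proj G True x) y"
  using wadd1 proj_sum by metis
lemma wsplit2: "\<omega> x y = \<omega> x (proj G False y) + \<omega> x (proj G True y)"
  using wadd2 proj_sum by metis

lemma glcomp_ad: "glcomp G a (ad \<omega> x) = ad \<omega> (proj G a x)"
proof
  fix v
  let ?x0 = "proj G False x" and ?x1 = "proj G True x"
  let ?v0 = "proj G False v" and ?v1 = "proj G True v"
  have i: "?x0 \<in> G False" "?x1 \<in> G True" "?v0 \<in> G False" "?v1 \<in> G True" by (rule proj_in)+
  have e0: "\<omega> x ?v0 = \<omega> ?x0 ?v0 + \<omega> ?x1 ?v0" and e1: "\<omega> x ?v1 = \<omega> ?x0 ?v1 + \<omega> ?x1 ?v1"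
    by (rule wsplit1)+
  have g: "\<omega> ?x0 ?v0 \<in> G False" "\<omega> ?x1 ?v0 \<in> G True" "\<omega> ?x0 ?v1 \<in> G True" "\<omega> ?x1 ?v1 \<in> G False"
    using grw[OF i(1) i(3)] grw[OF i(2) i(3)] grw[OF i(1) i(4)] grw[OF i(2) i(4)] by simp_all
  show "glcomp G a (ad \<omega> x) v = ad \<omega> (proj G a x) v"
  proof (cases a)
    case True
    have "glcomp G a (ad \<omega> x) v = \<omega> ?x1 ?v0 + \<omega> ?x1 ?v1"
      unfolding glcomp_def ad_def zadd_def e0 e1
      using proj_split'[of "\<omega> ?x0 ?v0" True "\<omega> ?x1 ?v0"] proj_split'[of "\<omega> ?x0 ?v1" False "\<omega> ?x1 ?v1"] g True
      by simp
    also have "\<dots> = \<omega> ?x1 v" using wsplit2[of ?x1 v] by simp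
    finally show ?thesis using True by (simp add: ad_def)
  next
    case False
    have "glcomp G a (ad \<omega> x) v = \<omega> ?x0 ?v0 + \<omega> ?x0 ?v1"
      unfolding glcomp_def ad_def zadd_def e0 e1
      using proj_split[of "\<omega> ?x0 ?v0" False "\<omega> ?x1 ?v0"] proj_split[of "\<omega> ?x0 ?v1" True "\<omega> ?x1 ?v1"] g False
      by simp
    also have "\<dots> = \<omega> ?x0 v" using wsplit2[of ?x0 v] by simp
    finally show ?thesis using False by (simp add: ad_def)
  qed
qed

lemma glcomp_w: "glcomp G a (\<omega> x) = \<omega> (proj G a x)"
  using glcomp_ad[of a x] by (simp add: ad_def)

lemma Epair_F: "Epair sc G (ad \<omega> x, x) (ad \<omega> y, y) =
  (\<Sum>a\<in>UNIV. \<Sum>b\<in>UNIV. sc (inverse 2) (\<omega> (proj G a x) (proj G b y) + sgnsc sc a b (\<omega> (proj G b y) (proj G a x))))"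
  by (simp add: Epair_def hpair_def Ecomp_def ad_def glcomp_w)

lemma Ebr_F: "Ebr sc G (ad \<omega> x, x) (ad \<omega> y, y) =
  ((\<lambda>v. \<Sum>a\<in>UNIV. \<Sum>b\<in>UNIV. \<omega> (proj G a x) (\<omega> (proj G b y) v) - sgnsc sc a b (\<omega> (proj G b y) (\<omega> (proj G a x) v))),
   (\<Sum>a\<in>UNIV. \<Sum>b\<in>UNIV. sc (inverse 2) (\<omega> (proj G a x) (proj G b y) - sgnsc sc a b (\<omega> (proj G b y) (proj G a x)))))"
  by (simp add: Ebr_def hbr_def scomm_def Ecomp_def ad_def glcomp_w)

lemma Epair_A: "Epair sc G (A, z) (ad \<omega> y, y) =
  (\<Sum>a\<in>UNIV. \<Sum>b\<in>UNIV. sc (inverse 2) (glcomp G a A (proj G b y) + sgnsc sc a b (\<omega> (proj G b y) (proj G a z))))"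
  by (simp add: Epair_def hpair_def Ecomp_def ad_def glcomp_w)

lemma glcomp_hom:
  assumes A: "Vector_Spaces.linear sc sc A" and v: "v \<in> G b"
  shows "glcomp G False A v + glcomp G True A v = A v"
proof (cases b)
  case True
  then have "proj G False v = 0" "proj G True v = v" using v proj_cases by auto
  then show ?thesis using proj_sum[of "A v"]
    by (simp add: glcomp_def zadd_def lin_0[OF A] proj_0 add.commute)
next
  case False
  then have "proj G False v = v" "proj G True v = 0" using v proj_cases by auto
  then show ?thesis using proj_sum[of "A v"]
    by (simp add: glcomp_def zadd_def lin_0[OF A] proj_0)
qed


lemma half2: "sc (inverse 2) (v + v) = v"
  by (metis V.scale_right_distrib half)

lemma sgn_add: "sgnsc sc a b (v + w) = sgnsc sc a b v + sgnsc sc a b w"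
  by (simp add: sgn_eq)

lemma Fom_in: "(ad \<omega> x, x) \<in> Fom \<omega>" by (auto simp: Fom_def)

lemma Fom_Esp: "Fom \<omega> \<subseteq> Esp sc"
  using lin2 by (auto simp: Fom_def Esp_def gl_def ad_def)

lemma w_sum: "\<omega> x y = (\<omega> (proj G False x) (proj G False y) + \<omega> (proj G False x) (proj G True y))
   + (\<omega> (proj G True x) (proj G False y) + \<omega> (proj G True x) (proj G True y))"
  using wsplit1[of x y] wsplit2[of "proj G False x" y] wsplit2[of "proj G True x" y] by simp

lemma fwd:
  assumes lie: "lie_superalgebra sc G \<omega>"
  shows "Fom \<omega> = Eperp sc G (Fom \<omega>) \<and> (\<forall>e\<in>Fom \<omega>. \<forall>f\<in>Fom \<omega>. Ebr sc G e f \<in> Fom \<omega>)"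
proof -
  have sk: "\<And>a b x y. x \<in> G a \<Longrightarrow> y \<in> G b \<Longrightarrow> \<omega> x y = - sgnsc sc a b (\<omega> y x)"
    using lie unfolding lie_superalgebra_def by blast
  have jac: "\<And>a b c x y z. x \<in> G a \<Longrightarrow> y \<in> G b \<Longrightarrow> z \<in> G c \<Longrightarrow>
        \<omega> x (\<omega> y z) = \<omega> (\<omega> x y) z + sgnsc sc a b (\<omega> y (\<omega> x z))"
    using lie unfolding lie_superalgebra_def by blast
  have sk2: "\<And>a b x y. x \<in> G a \<Longrightarrow> y \<in> G b \<Longrightarrow> sgnsc sc a b (\<omega> y x) = - \<omega> x y"
  proof -
    fix a b x y assume "x \<in> G a" "y \<in> G b"
    then have "\<omega> y x = - sgnsc sc b a (\<omega> x y)" using sk by blast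
    then show "sgnsc sc a b (\<omega> y x) = - \<omega> x y" by (auto simp: sgn_eq)
  qed
  have iso: "\<And>x y. Epair sc G (ad \<omega> x, x) (ad \<omega> y, y) = 0"
    by (simp add: Epair_F sk2[OF proj_in proj_in])
  have perp: "Eperp sc G (Fom \<omega>) \<subseteq> Fom \<omega>"
  proof
    fix e assume e: "e \<in> Eperp sc G (Fom \<omega>)"
    obtain A z where ez: "e = (A, z)" by (cases e)
    have A: "Vector_Spaces.linear sc sc A" using e ez by (simp add: Eperp_def Esp_def gl_def)
    have "A y = \<omega> z y" for y
    proof -
      have "Epair sc G (A, z) (ad \<omega> y, y) = 0" using e ez Fom_in by (auto simp: Eperp_def)
      moreover have "Epair sc G (A, z) (ad \<omega> y, y) = sc (inverse 2) (A y - \<omega> z y)"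
      proof -
        define g where "g = (\<lambda>a b. glcomp G a A (proj G b y))"
        define w where "w = (\<lambda>a b. \<omega> (proj G a z) (proj G b y))"
        have t: "\<And>a b. glcomp G a A (proj G b y) + sgnsc sc a b (\<omega> (proj G b y) (proj G a z)) = g a b - w a b"
          using sk2[OF proj_in proj_in] by (simp add: g_def w_def)
        have Ay: "A y = (g False False + g True False) + (g False True + g True True)"
        proof -
          have "A y = A (proj G False y) + A (proj G True y)"
            using lin_add[OF A] proj_sum by metis
          then show ?thesis using glcomp_hom[OF A proj_in, of False y] glcomp_hom[OF A proj_in, of True y]
            by (simp add: g_def)
        qed
        have wz: "\<omega> z y = (w False False + w False True) + (w True False + w True True)"
          using w_sum[of z y] by (simp add: w_def)
        have "Epair sc G (A, z) (ad \<omega> y, y) = (\<Sum>a\<in>UNIV. \<Sum>b\<in>UNIV. sc (inverse 2) (g a b - w a b))"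
          unfolding Epair_A t ..
        also have "\<dots> = sc (inverse 2) (((g False False + g True False) + (g False True + g True True))
             - ((w False False + w False True) + (w True False + w True True)))"
          by (simp add: sum_bool V.scale_right_distrib V.scale_right_diff_distrib algebra_simps)
        also have "\<dots> = sc (inverse 2) (A y - \<omega> z y)" using Ay wz by simp
        finally show ?thesis .
      qed
      ultimately show ?thesis using half0 by simp
    qed
    then have "A = ad \<omega> z" by (auto simp: ad_def)
    then show "e \<in> Fom \<omega>" using ez Fom_in by simp
  qed
  have eq1: "Fom \<omega> = Eperp sc G (Fom \<omega>)"
  proof
    show "Fom \<omega> \<subseteq> Eperp sc G (Fom \<omega>)"
      using Fom_Esp iso by (auto simp: Eperp_def Fom_def)
  qed (rule perp)
  have jg: "\<And>a b x y v. x \<in> G a \<Longrightarrow> y \<in> G b \<Longrightarrow>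
     \<omega> x (\<omega> y v) - sgnsc sc a b (\<omega> y (\<omega> x v)) = \<omega> (\<omega> x y) v"
  proof -
    fix a b x y v assume x: "x \<in> G a" and y: "y \<in> G b"
    have r: "\<And>c. \<omega> x (\<omega> y (proj G c v)) - sgnsc sc a b (\<omega> y (\<omega> x (proj G c v))) = \<omega> (\<omega> x y) (proj G c v)"
      using jac[OF x y proj_in] by (simp add: algebra_simps)
    have "\<omega> x (\<omega> y v) - sgnsc sc a b (\<omega> y (\<omega> x v)) =
       (\<omega> x (\<omega> y (proj G False v)) - sgnsc sc a b (\<omega> y (\<omega> x (proj G False v))))
     + (\<omega> x (\<omega> y (proj G True v)) - sgnsc sc a b (\<omega> y (\<omega> x (proj G True v))))"
      using wsplit2[of y v] wsplit2[of x v] by (simp add: wadd2 sgn_add algebra_simps)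
    also have "\<dots> = \<omega> (\<omega> x y) v" using r wsplit2[of "\<omega> x y" v] by simp
    finally show "\<omega> x (\<omega> y v) - sgnsc sc a b (\<omega> y (\<omega> x v)) = \<omega> (\<omega> x y) v" .
  qed
  have cl: "Ebr sc G (ad \<omega> x, x) (ad \<omega> y, y) = (ad \<omega> (\<omega> x y), \<omega> x y)" for x y
  proof -
    have t2: "\<And>a b. sc (inverse 2) (\<omega> (proj G a x) (proj G b y) - sgnsc sc a b (\<omega> (proj G b y) (proj G a x)))
        = \<omega> (proj G a x) (proj G b y)"
      using sk2[OF proj_in proj_in] half2 by simp
    have s: "(\<Sum>a\<in>UNIV. \<Sum>b\<in>UNIV. \<omega> (proj G a x) (proj G b y)) = \<omega> x y"
      using w_sum[of x y] by (simp add: sum_bool)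
    have f: "(\<lambda>v. \<Sum>a\<in>UNIV. \<Sum>b\<in>UNIV. \<omega> (proj G a x) (\<omega> (proj G b y) v) - sgnsc sc a b (\<omega> (proj G b y) (\<omega> (proj G a x) v)))
        = ad \<omega> (\<omega> x y)"
    proof
      fix v
      have "(\<Sum>a\<in>UNIV. \<Sum>b\<in>UNIV. \<omega> (proj G a x) (\<omega> (proj G b y) v) - sgnsc sc a b (\<omega> (proj G b y) (\<omega> (proj G a x) v)))
         = (\<Sum>a\<in>UNIV. \<Sum>b\<in>UNIV. \<omega> (\<omega> (proj G a x) (proj G b y)) v)"
        using jg[OF proj_in proj_in] by simp
      also have "\<dots> = \<omega> (\<Sum>a\<in>UNIV. \<Sum>b\<in>UNIV. \<omega> (proj G a x) (proj G b y)) v"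
        by (simp add: sum_bool wadd1)
      finally show "(\<Sum>a\<in>UNIV. \<Sum>b\<in>UNIV. \<omega> (proj G a x) (\<omega> (proj G b y) v) - sgnsc sc a b (\<omega> (proj G b y) (\<omega> (proj G a x) v)))
         = ad \<omega> (\<omega> x y) v" using s by (simp add: ad_def)
    qed
    show ?thesis unfolding Ebr_F t2 s f ..
  qed
  have "\<forall>e\<in>Fom \<omega>. \<forall>f\<in>Fom \<omega>. Ebr sc G e f \<in> Fom \<omega>"
    using cl Fom_in by (auto simp: Fom_def)
  with eq1 show ?thesis by blast
qed

lemma bwd:
  assumes h1: "Fom \<omega> = Eperp sc G (Fom \<omega>)"
    and h2: "\<forall>e\<in>Fom \<omega>. \<forall>f\<in>Fom \<omega>. Ebr sc G e f \<in> Fom \<omega>"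
  shows "lie_superalgebra sc G \<omega>"
proof -
  have sk: "\<omega> x y = - sgnsc sc a b (\<omega> y x)" if x: "x \<in> G a" and y: "y \<in> G b" for a b x y
  proof -
    have "Epair sc G (ad \<omega> x, x) (ad \<omega> y, y) = 0"
      using h1 Fom_in[of x] Fom_in[of y] by (auto simp: Eperp_def)
    moreover have "Epair sc G (ad \<omega> x, x) (ad \<omega> y, y) = sc (inverse 2) (\<omega> x y + sgnsc sc a b (\<omega> y x))"
      by (cases a; cases b) (simp_all add: Epair_F sum_bool proj_cases[OF x] proj_cases[OF y] sgn_eq)
    ultimately have "\<omega> x y + sgnsc sc a b (\<omega> y x) = 0" using half0 by simp
    then show ?thesis by (simp add: eq_neg_iff_add_eq_0)
  qed
  have jac: "\<omega> x (\<omega> y z) = \<omega> (\<omega> x y) z + sgnsc sc a b (\<omega> y (\<omega> x z))"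
    if x: "x \<in> G a" and y: "y \<in> G b" and z: "z \<in> G c" for a b c x y z
  proof -
    obtain u where u: "Ebr sc G (ad \<omega> x, x) (ad \<omega> y, y) = (ad \<omega> u, u)"
      using h2 Fom_in[of x] Fom_in[of y] by (auto simp: Fom_def)
    have E: "Ebr sc G (ad \<omega> x, x) (ad \<omega> y, y) =
       ((\<lambda>v. \<omega> x (\<omega> y v) - sgnsc sc a b (\<omega> y (\<omega> x v))), sc (inverse 2) (\<omega> x y - sgnsc sc a b (\<omega> y x)))"
      by (cases a; cases b) (simp_all add: Ebr_F sum_bool proj_cases[OF x] proj_cases[OF y] sgn_eq)
    have s2: "sgnsc sc a b (\<omega> y x) = - \<omega> x y"
      using sk[OF y x] by (auto simp: sgn_eq)
    have "u = \<omega> x y" using u E s2 half2 by simp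
    moreover have "ad \<omega> u z = \<omega> x (\<omega> y z) - sgnsc sc a b (\<omega> y (\<omega> x z))"
      using u E by (metis fst_conv)
    ultimately show ?thesis by (simp add: ad_def algebra_simps)
  qed
  show ?thesis unfolding lie_superalgebra_def using bil gr sk jac by blast
qed

end

theorem mainTheorem3:
  fixes sc :: "'k::field_char_0 \<Rightarrow> 'v::ab_group_add \<Rightarrow> 'v"
    and G :: "bool \<Rightarrow> 'v set"
    and \<omega> :: "'v \<Rightarrow> 'v \<Rightarrow> 'v"
  assumes "fd_super_vector_space sc G"
    and "bilinear_map sc \<omega>"
    and "graded_map G \<omega>"
  shows "lie_superalgebra sc G \<omega> \<longleftrightarrow>
           (Fom \<omega> = Eperp sc G (Fom \<omega>) \<and>
            (\<forall>e\<in>Fom \<omega>. \<forall>f\<in>Fom \<omega>. Ebr sc G e f \<in> Fom \<omega>))"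
proof -
  interpret svsw sc G \<omega> using assms by unfold_locales auto
  show ?thesis using fwd bwd by blast
qed

end
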